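(* Let $M$ be a $\Lambda_{\mathrm{NF}}$-inhabitant of the formula $\phi$. If $M$ is not locally compact, then there exist two addresses $b<b'$ in $\mathrm{dom}(M)$ such that $M|_b$ and $M|_{b'}$ are of the same kind and $\mathrm{Free}(M|_b)=\mathrm{Free}(M|_{b'})$. Moreover, $M$ is then not a $\Lambda_{\mathrm{NF}}$-inhabitant of $\phi$ of minimal size (size meaning $|\mathrm{dom}(M)|$).
   Context: Formulas are built from atoms with $\to$; $\mathrm{Sub}(\phi)$ is the set of subformulas of $\phi$. Let $\mathcal X$ be a countably infinite set of variables with an injective map $\mathcal O:\mathcal X\to\mathbb N$; $x<y$ iff $\mathcal O(x)<\mathcal O(y)$. Terms are pure $\lambda$-terms over $\mathcal X$, not identified up to $\alpha$-conversion; no two $\lambda$'s bind the same variable and no variable is both free and bound. $\mathrm{Free}(M)$ is the strictly increasing sequence of free variables of $M$. HRM terms: variables; $\lambda x.M$ with $M$ HRM and $x$ the greatest free variable of $M$; $(MN)$ with $M,N$ HRM and every free variable of $M$ $\le$ some free variable of $N$. Fix $\Omega$ from variables to formulas with each $\Omega^{-1}(\phi)$ infinite. Typing: $x:\Omega(x)$; $\lambda x.M:\chi\to\psi$ if $x:\chi$, $M:\psi$, $\lambda x.M$ HRM; $(MN):\psi$ if $M:\chi\to\psi$, $N:\chi$, $(MN)$ HRM. $\Lambda_{\mathrm{NF}}$ is the set of typed $\beta$-normal terms; a $\Lambda_{\mathrm{NF}}$-inhabitant of $\phi$ is a closed term of $\Lambda_{\mathrm{NF}}$ of type $\phi$. Two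 terms of $\Lambda_{\mathrm{NF}}$ are of the same kind if both are variables, or both applications, or both abstractions, and they have the same type. Addresses are finite sequences of positive integers with prefix order $\le$ ($<$ strict), concatenation $\cdot$, empty address $\varepsilon$. Terms are identified with trees: $x$ is $\varepsilon\mapsto x$; $\lambda x.M$ maps $\varepsilon$ to $\lambda x$ with subtree $M$ at $(1)$; $(M_1M_2)$ maps $\varepsilon$ to $@$ with subtrees at $(1),(2)$; $M|_a$ is the subterm at $a$. For a partial tree $\pi$, $\pi|_a$ is $c\mapsto\pi(a\cdot c)$. Let $\mathfrak S$ consist of all formulas (arity 0) and symbols $@_\phi$ (arity 2). A blueprint is a finite partial tree with values in $\mathfrak S$ such that if $\alpha(a)=@_\phi$ then $\alpha|_{a\cdot(1)},\alpha|_{a\cdot(2)}$ have non-empty domains. The relative depth of an address $a$ in a blueprint $\alpha$ is the number of $b\in\mathrm{dom}(\alpha)$ with $b<a$; the relative depth of $\alpha$ is $0$ if $\alpha$ is empty and otherwise the maximal relative depth of an address of $\mathrm{dom}(\alpha)$. The stable part of $M\in\Lambda_{\mathrm{NF}}$ is the set of $a\in\mathrm{dom}(M)$ with $\mathrm{Free}(M|_a)\subseteq\mathrm{Free}(M)$ and $M|_a$ a variable or an application; the blueprint of $M$ maps each $a$ in the stable part to $\psi$ if $M|_a$ is a variable of type $\psi$ and to $@_\psi$ if $M|_a$ is an application of type $\psi$. For $a\in\mathrm{dom}(M)$, $\Lambda(M,a)$ is the sequence $(x_1,\dots,x_k)$ of variables such that $(\lambda x_1,\dots,\lambda x_k)$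 are, in order, the labels of the form $\lambda x$ of $M$ at the prefixes of $a$ (including $a$). A $\Lambda_{\mathrm{NF}}$-inhabitant $M$ of $\phi$ is locally compact if for every $a\in\mathrm{dom}(M)$ the blueprint of $M|_a$ has relative depth at most $|\Lambda(M,a)|\times|\mathrm{Sub}(\phi)|$. *)

theory Defs
  imports Main "HOL-Library.Sublist"
begin

datatype 'a form = Atom 'a | Imp "'a form" "'a form"

fun Sub :: "'a form \<Rightarrow> 'a form set" where
  "Sub (Atom p) = {Atom p}"
| "Sub (Imp A B) = insert (Imp A B) (Sub A \<union> Sub B)"

section \<open>Terms (not identified up to alpha-conversion)\<close>

datatype 'v trm = Var 'v | Lam 'v "'v trm" | App "'v trm" "'v trm"

fun fvl :: "'v trm \<Rightarrow> 'v list" where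
  "fvl (Var x) = [x]"
| "fvl (Lam x M) = filter (\<lambda>y. y \<noteq> x) (fvl M)"
| "fvl (App M N) = fvl M @ fvl N"

definition fv :: "'v trm \<Rightarrow> 'v set" where
  "fv M = set (fvl M)"

definition Free :: "('v \<Rightarrow> nat) \<Rightarrow> 'v trm \<Rightarrow> 'v list" where
  "Free ord M = sort_key ord (remdups (fvl M))"

fun binders :: "'v trm \<Rightarrow> 'v list" where
  "binders (Var x) = []"
| "binders (Lam x M) = x # binders M"
| "binders (App M N) = binders M @ binders N"

text \<open>Standing convention: no two lambdas bind the same variable, and no variable
  is both free and bound.\<close>
definition wf_binders :: "'v trm \<Rightarrow> bool" where
  "wf_binders M \<longleftrightarrow> distinct (binders M) \<and> set (binders M) \<inter> fv M = {}"

text \<open>HRM terms, with x < y iff ord x < ord y.\<close>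
fun HRM :: "('v \<Rightarrow> nat) \<Rightarrow> 'v trm \<Rightarrow> bool" where
  "HRM ord (Var x) = True"
| "HRM ord (Lam x M) \<longleftrightarrow> HRM ord M \<and> x \<in> fv M \<and> (\<forall>y\<in>fv M. ord y \<le> ord x)"
| "HRM ord (App M N) \<longleftrightarrow> HRM ord M \<and> HRM ord N \<and> (\<forall>y\<in>fv M. \<exists>z\<in>fv N. ord y \<le> ord z)"

inductive typed :: "('v \<Rightarrow> nat) \<Rightarrow> ('v \<Rightarrow> 'a form) \<Rightarrow> 'v trm \<Rightarrow> 'a form \<Rightarrow> bool"
  for ord :: "'v \<Rightarrow> nat" and \<Omega> :: "'v \<Rightarrow> 'a form" where
  tVar: "typed ord \<Omega> (Var x) (\<Omega> x)"
| tLam: "typed ord \<Omega> M \<psi> \<Longrightarrow> HRM ord (Lam x M) \<Longrightarrow> typed ord \<Omega> (Lam x M) (Imp (\<Omega> x) \<psi>)"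
| tApp: "typed ord \<Omega> M (Imp \<chi> \<psi>) \<Longrightarrow> typed ord \<Omega> N \<chi> \<Longrightarrow> HRM ord (App M N)
          \<Longrightarrow> typed ord \<Omega> (App M N) \<psi>"

fun beta_normal :: "'v trm \<Rightarrow> bool" where
  "beta_normal (Var x) = True"
| "beta_normal (Lam x M) = beta_normal M"
| "beta_normal (App M N) \<longleftrightarrow> (\<forall>y P. M \<noteq> Lam y P) \<and> beta_normal M \<and> beta_normal N"

definition LambdaNF :: "('v \<Rightarrow> nat) \<Rightarrow> ('v \<Rightarrow> 'a form) \<Rightarrow> 'v trm \<Rightarrow> bool" where
  "LambdaNF ord \<Omega> M \<longleftrightarrow> wf_binders M \<and> beta_normal M \<and> (\<exists>\<tau>. typed ord \<Omega> M \<tau>)"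

definition inhabitant :: "('v \<Rightarrow> nat) \<Rightarrow> ('v \<Rightarrow> 'a form) \<Rightarrow> 'v trm \<Rightarrow> 'a form \<Rightarrow> bool" where
  "inhabitant ord \<Omega> M \<phi> \<longleftrightarrow> LambdaNF ord \<Omega> M \<and> fv M = {} \<and> typed ord \<Omega> M \<phi>"

definition same_kind :: "('v \<Rightarrow> nat) \<Rightarrow> ('v \<Rightarrow> 'a form) \<Rightarrow> 'v trm \<Rightarrow> 'v trm \<Rightarrow> bool" where
  "same_kind ord \<Omega> M N \<longleftrightarrow>
     ((\<exists>x y. M = Var x \<and> N = Var y) \<or> (\<exists>M1 M2 N1 N2. M = App M1 M2 \<and> N = App N1 N2)
       \<or> (\<exists>x M1 y N1. M = Lam x M1 \<and> N = Lam y N1))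
     \<and> (\<exists>\<tau>. typed ord \<Omega> M \<tau> \<and> typed ord \<Omega> N \<tau>)"

fun subt :: "'v trm \<Rightarrow> nat list \<Rightarrow> 'v trm option" where
  "subt M [] = Some M"
| "subt (Var x) (i # a) = None"
| "subt (Lam x M) (i # a) = (if i = 1 then subt M a else None)"
| "subt (App M N) (i # a) = (if i = 1 then subt M a else if i = 2 then subt N a else None)"

definition tdom :: "'v trm \<Rightarrow> nat list set" where
  "tdom M = {a. subt M a \<noteq> None}"

definition at :: "'v trm \<Rightarrow> nat list \<Rightarrow> 'v trm" (infixl "|@" 90) where
  "M |@ a = the (subt M a)"

text \<open>Lambda(M,a): variables of lambda labels at prefixes of a (including a), in order.\<close>
fun lams :: "'v trm \<Rightarrow> nat list \<Rightarrow> 'v list" where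
  "lams (Var x) a = []"
| "lams (Lam x M) [] = [x]"
| "lams (Lam x M) (i # a) = (if i = 1 then x # lams M a else [])"
| "lams (App M N) [] = []"
| "lams (App M N) (i # a) = (if i = 1 then lams M a else if i = 2 then lams N a else [])"

datatype 'a sym = SForm "'a form" | SApp "'a form"

type_synonym 'a ptree = "nat list \<Rightarrow> 'a sym option"

definition rel_depth_addr :: "'a ptree \<Rightarrow> nat list \<Rightarrow> nat" where
  "rel_depth_addr \<alpha> a = card {b \<in> dom \<alpha>. strict_prefix b a}"

definition rel_depth :: "'a ptree \<Rightarrow> nat" where
  "rel_depth \<alpha> = (if dom \<alpha> = {} then 0 else Max (rel_depth_addr \<alpha> ` dom \<alpha>))"

definition stable_part :: "('v \<Rightarrow> nat) \<Rightarrow> 'v trm \<Rightarrow> nat list set" where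
  "stable_part ord M = {a \<in> tdom M. set (Free ord (M |@ a)) \<subseteq> set (Free ord M)
       \<and> ((\<exists>x. M |@ a = Var x) \<or> (\<exists>P Q. M |@ a = App P Q))}"

definition blueprint :: "('v \<Rightarrow> nat) \<Rightarrow> ('v \<Rightarrow> 'a form) \<Rightarrow> 'v trm \<Rightarrow> 'a ptree" where
  "blueprint ord \<Omega> M a =
     (if a \<in> stable_part ord M then
        (case M |@ a of
           Var x \<Rightarrow> Some (SForm (THE \<tau>. typed ord \<Omega> (M |@ a) \<tau>))
         | App P Q \<Rightarrow> Some (SApp (THE \<tau>. typed ord \<Omega> (M |@ a) \<tau>))
         | Lam y P \<Rightarrow> None)
      else None)"

definition locally_compact :: "('v \<Rightarrow> nat) \<Rightarrow> ('v \<Rightarrow> 'a form) \<Rightarrow> 'v trm \<Rightarrow> 'a form \<Rightarrow> bool" where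
  "locally_compact ord \<Omega> M \<phi> \<longleftrightarrow> inhabitant ord \<Omega> M \<phi> \<and>
     (\<forall>a \<in> tdom M. rel_depth (blueprint ord \<Omega> (M |@ a)) \<le> length (lams M a) * card (Sub \<phi>))"

end

theory Submission
  imports Defs
begin

lemma fv_simps[simp]: "fv (Var x) = {x}" "fv (Lam x P) = fv P - {x}" "fv (App P Q) = fv P \<union> fv Q"
  by (auto simp: fv_def)

lemma tdom_Var[simp]: "tdom (Var x) = {[]}"
  by (auto simp: tdom_def elim: subt.elims)
lemma tdom_Lam: "tdom (Lam x P) = insert [] ((#) 1 ` tdom P)"
  apply (auto simp: tdom_def)
  subgoal for a by (cases a) (auto split: if_splits)
  done
lemma tdom_App: "tdom (App P Q) = insert [] ((#) 1 ` tdom P \<union> (#) 2 ` tdom Q)"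
  apply (auto simp: tdom_def)
  subgoal for a by (cases a) (auto split: if_splits)
  done

lemma at_simps[simp]: "M |@ [] = M" "Lam x P |@ (1#d) = P |@ d"
  "App P Q |@ (1#d) = P |@ d" "App P Q |@ (Suc (Suc 0)#d) = Q |@ d"
  "Lam x P |@ (Suc 0#d) = P |@ d" "App P Q |@ (Suc 0#d) = P |@ d"
  by (auto simp: at_def)

lemma nil_tdom[simp]: "[] \<in> tdom M" by (simp add: tdom_def)

lemma subt_append: "subt M (b @ d) = (case subt M b of None \<Rightarrow> None | Some N \<Rightarrow> subt N d)"
  by (induction M b rule: subt.induct) auto

lemma tdom_append: "b @ d \<in> tdom M \<longleftrightarrow> b \<in> tdom M \<and> d \<in> tdom (M |@ b)"
  by (auto simp: tdom_def at_def subt_append split: option.splits)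

lemma at_append: "b \<in> tdom M \<Longrightarrow> M |@ (b @ d) = (M |@ b) |@ d"
  by (auto simp: tdom_def at_def subt_append split: option.splits)

lemma tdom_finite: "finite (tdom M)"
  by (induction M) (auto simp: tdom_Lam tdom_App)

fun tsize :: "'v trm \<Rightarrow> nat" where
  "tsize (Var x) = 1" | "tsize (Lam x P) = Suc (tsize P)" | "tsize (App P Q) = Suc (tsize P + tsize Q)"

lemma card_tdom: "card (tdom M) = tsize M"
proof (induction M)
  case (Lam x P)
  have "card ((#) 1 ` tdom P) = card (tdom P)" by (rule card_image) (auto simp: inj_on_def)
  then show ?case using Lam tdom_finite[of P] by (simp add: tdom_Lam card_insert_if image_iff)
next
  case (App P Q)
  have 1: "card ((#) 1 ` tdom P) = card (tdom P)" by (rule card_image) (auto simp: inj_on_def)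
  have 2: "card ((#) 2 ` tdom Q) = card (tdom Q)" by (rule card_image) (auto simp: inj_on_def)
  have "card ((#) 1 ` tdom P \<union> (#) 2 ` tdom Q) = card (tdom P) + card (tdom Q)"
    using 1 2 by (subst card_Un_disjoint) (auto simp: tdom_finite)
  then show ?case using App tdom_finite[of P] tdom_finite[of Q] by (simp add: tdom_App card_insert_if image_iff)
qed simp

lemma tsize_sub: "d \<in> tdom M \<Longrightarrow> d \<noteq> [] \<Longrightarrow> tsize (M |@ d) < tsize M"
proof (induction M arbitrary: d)
  case (Lam x P)
  then obtain d' where d: "d = 1 # d'" "d' \<in> tdom P" by (auto simp: tdom_Lam)
  show ?case proof (cases "d' = []")
    case True then show ?thesis using d by simp
  next
    case False then show ?thesis using d Lam.IH[of d'] by simp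
  qed
next
  case (App P Q)
  then consider d' where "d = 1 # d'" "d' \<in> tdom P" | d' where "d = 2 # d'" "d' \<in> tdom Q"
    by (auto simp: tdom_App)
  then show ?case proof cases
    case 1 then show ?thesis using App.IH(1)[of d'] by (cases "d' = []") auto
  next
    case 2 then show ?thesis using App.IH(2)[of d'] by (cases "d' = []") (auto simp: numeral_2_eq_2)
  qed
qed simp

lemma var_leaf: "b @ d \<in> tdom M \<Longrightarrow> d \<noteq> [] \<Longrightarrow> M |@ b \<noteq> Var x"
  by (cases d) (auto simp: tdom_append)

lemma subseq_distinct: "subseq xs ys \<Longrightarrow> distinct ys \<Longrightarrow> distinct xs"
  by (induct rule: list_emb.induct) (auto dest: list_emb_set)


lemma tdom_cases[consumes 1, case_names Nil Lam App1 App2]: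
  assumes "d \<in> tdom t"
    and "d = [] \<Longrightarrow> P"
    and "\<And>x Q d'. t = Lam x Q \<Longrightarrow> d = 1#d' \<Longrightarrow> d' \<in> tdom Q \<Longrightarrow> P"
    and "\<And>Q R d'. t = App Q R \<Longrightarrow> d = 1#d' \<Longrightarrow> d' \<in> tdom Q \<Longrightarrow> P"
    and "\<And>Q R d'. t = App Q R \<Longrightarrow> d = 2#d' \<Longrightarrow> d' \<in> tdom R \<Longrightarrow> P"
  shows P
  using assms by (cases t) (auto simp: tdom_Lam tdom_App)

inductive_cases typed_VarE: "typed ord \<Omega> (Var x) \<tau>"
inductive_cases typed_LamE: "typed ord \<Omega> (Lam x M) \<tau>"
inductive_cases typed_AppE: "typed ord \<Omega> (App M N) \<tau>"

lemma typed_HRM: "typed ord \<Omega> t \<tau> \<Longrightarrow> HRM ord t"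
  by (induction rule: typed.induct) auto

lemma typed_unique: "typed ord \<Omega> t \<tau> \<Longrightarrow> typed ord \<Omega> t \<sigma> \<Longrightarrow> \<tau> = \<sigma>"
proof (induction arbitrary: \<sigma> rule: typed.induct)
  case (tApp M \<chi> \<psi> N)
  then show ?case by (blast elim: typed_AppE)
qed (blast elim: typed_VarE typed_LamE)+

lemma typed_sub: "typed ord \<Omega> t \<tau> \<Longrightarrow> d \<in> tdom t \<Longrightarrow> \<exists>\<sigma>. typed ord \<Omega> (t |@ d) \<sigma>"
proof (induction t arbitrary: \<tau> d)
  case (Var x) then show ?case by auto
next
  case (Lam x P) from Lam.prems(2) show ?case
  proof (cases rule: tdom_cases)
    case Nil then show ?thesis using Lam.prems(1) by auto
  qed (use Lam in \<open>auto elim!: typed_LamE\<close>)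
next
  case (App P Q) from App.prems(2) show ?case
  proof (cases rule: tdom_cases)
    case Nil then show ?thesis using App.prems(1) by auto
  qed (use App in \<open>auto simp: numeral_2_eq_2 elim!: typed_AppE\<close>)
qed

lemma bn_sub: "beta_normal t \<Longrightarrow> d \<in> tdom t \<Longrightarrow> beta_normal (t |@ d)"
proof (induction t arbitrary: d)
  case (Var x) then show ?case by auto
next
  case (Lam x P) from Lam.prems(2) show ?case
    by (cases rule: tdom_cases) (use Lam in auto)
next
  case (App P Q) from App.prems(2) show ?case
    by (cases rule: tdom_cases) (use App in \<open>auto simp: numeral_2_eq_2\<close>)
qed

lemma subseq_app_r: "subseq xs ys \<Longrightarrow> subseq xs (ys @ zs)"
  by (metis list_emb_append_mono list_emb_Nil append_Nil2)
lemma subseq_app_l: "subseq xs ys \<Longrightarrow> subseq xs (zs @ ys)"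
  by (rule list_emb_append2)

lemma binders_sub: "d \<in> tdom t \<Longrightarrow> subseq (binders (t |@ d)) (binders t)"
proof (induction t arbitrary: d)
  case (Var x) then show ?case by auto
next
  case (Lam x P) from Lam.prems show ?case
    by (cases rule: tdom_cases) (use Lam in auto)
next
  case (App P Q) from App.prems show ?case
    by (cases rule: tdom_cases) (use App in \<open>auto simp: numeral_2_eq_2 intro: subseq_app_l subseq_app_r\<close>)
qed

lemma fv_sub: "d \<in> tdom t \<Longrightarrow> fv (t |@ d) \<subseteq> fv t \<union> set (binders t)"
proof (induction t arbitrary: d)
  case (Var x) then show ?case by auto
next
  case (Lam x P) from Lam.prems show ?case
    by (cases rule: tdom_cases) (use Lam in fastforce)+
next
  case (App P Q) from App.prems show ?case
    by (cases rule: tdom_cases) (use App in \<open>fastforce simp: numeral_2_eq_2\<close>)+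
qed

lemma fv_lams: "d \<in> tdom t \<Longrightarrow> fv (t |@ d) \<subseteq> fv t \<union> set (lams t d)"
proof (induction t arbitrary: d)
  case (Var x) then show ?case by auto
next
  case (Lam x P) from Lam.prems show ?case
    by (cases rule: tdom_cases) (use Lam in fastforce)+
next
  case (App P Q) from App.prems show ?case
    by (cases rule: tdom_cases) (use App in \<open>fastforce simp: numeral_2_eq_2\<close>)+
qed

lemma wf_sub: "wf_binders t \<Longrightarrow> d \<in> tdom t \<Longrightarrow> wf_binders (t |@ d)"
proof (induction t arbitrary: d)
  case (Var x) then show ?case by auto
next
  case (Lam x P)
  have "wf_binders P" using Lam.prems(1) by (auto simp: wf_binders_def)
  from Lam.prems(2) show ?case
    by (cases rule: tdom_cases) (use Lam \<open>wf_binders P\<close> in auto)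
next
  case (App P Q)
  have "wf_binders P" "wf_binders Q" using App.prems(1) by (auto simp: wf_binders_def)
  from App.prems(2) show ?case
    by (cases rule: tdom_cases) (use App \<open>wf_binders P\<close> \<open>wf_binders Q\<close> in \<open>auto simp: numeral_2_eq_2\<close>)
qed

lemma bn_fv: "beta_normal t \<Longrightarrow> \<forall>y P. t \<noteq> Lam y P \<Longrightarrow> fv t \<noteq> {}"
  by (induction t) auto

lemma Sub_refl: "\<tau> \<in> Sub \<tau>" by (cases \<tau>) auto
lemma Sub_trans: "\<sigma> \<in> Sub \<tau> \<Longrightarrow> Sub \<sigma> \<subseteq> Sub \<tau>"
  by (induction \<tau>) auto
lemma Sub_finite: "finite (Sub \<tau>)" by (induction \<tau>) auto

lemma subformula:
  "typed ord \<Omega> t \<tau> \<Longrightarrow> beta_normal t \<Longrightarrow>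
    (\<forall>d\<in>tdom t. \<forall>\<sigma>. typed ord \<Omega> (t |@ d) \<sigma> \<longrightarrow> \<sigma> \<in> Sub \<tau> \<union> (\<Union>x\<in>fv t. Sub (\<Omega> x)))
    \<and> ((\<forall>y P. t \<noteq> Lam y P) \<longrightarrow> (\<exists>h\<in>fv t. \<tau> \<in> Sub (\<Omega> h)))"
proof (induction rule: typed.induct)
  case (tVar x)
  then show ?case by (auto simp: Sub_refl dest: typed_unique elim: typed_VarE)
next
  case (tLam M \<psi> x)
  have A: "Sub \<psi> \<subseteq> Sub (Imp (\<Omega> x) \<psi>)" "Sub (\<Omega> x) \<subseteq> Sub (Imp (\<Omega> x) \<psi>)" by auto
  show ?case
  proof (intro conjI ballI allI impI)
    fix d \<sigma> assume d: "d \<in> tdom (Lam x M)" and ty: "typed ord \<Omega> (Lam x M |@ d) \<sigma>"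
    from d show "\<sigma> \<in> Sub (Imp (\<Omega> x) \<psi>) \<union> (\<Union>y\<in>fv (Lam x M). Sub (\<Omega> y))"
    proof (cases rule: tdom_cases)
      case Nil
      have "typed ord \<Omega> (Lam x M) (Imp (\<Omega> x) \<psi>)" using tLam.hyps by (rule typed.tLam)
      then have "\<sigma> = Imp (\<Omega> x) \<psi>" using ty Nil typed_unique by fastforce
      then show ?thesis by (simp add: Sub_refl)
    next
      case (Lam x' Q d')
      then have "\<sigma> \<in> Sub \<psi> \<union> (\<Union>y\<in>fv M. Sub (\<Omega> y))" using tLam ty by auto
      then show ?thesis using A by auto
    qed auto
  qed auto
next
  case (tApp M \<chi> \<psi> N)
  from tApp.prems have bM: "beta_normal M" "beta_normal N" "\<forall>y P. M \<noteq> Lam y P" by auto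
  from tApp.IH(1) bM obtain h where h: "h \<in> fv M" "Imp \<chi> \<psi> \<in> Sub (\<Omega> h)" by blast
  have S: "Sub (Imp \<chi> \<psi>) \<subseteq> Sub (\<Omega> h)" "Sub \<chi> \<subseteq> Sub (\<Omega> h)" "Sub \<psi> \<subseteq> Sub (\<Omega> h)"
    using Sub_trans[OF h(2)] by auto
  show ?case
  proof (intro conjI ballI allI impI)
    fix d \<sigma> assume d: "d \<in> tdom (App M N)" and ty: "typed ord \<Omega> (App M N |@ d) \<sigma>"
    from d show "\<sigma> \<in> Sub \<psi> \<union> (\<Union>y\<in>fv (App M N). Sub (\<Omega> y))"
    proof (cases rule: tdom_cases)
      case Nil
      have "typed ord \<Omega> (App M N) \<psi>" using tApp.hyps by (rule typed.tApp)
      then have "\<sigma> = \<psi>" using ty Nil typed_unique by fastforce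
      then show ?thesis by (simp add: Sub_refl)
    next
      case (App1 Q R d')
      then have "\<sigma> \<in> Sub (Imp \<chi> \<psi>) \<union> (\<Union>y\<in>fv M. Sub (\<Omega> y))" using tApp.IH(1) bM ty by auto
      then show ?thesis using S h by auto
    next
      case (App2 Q R d')
      then have "\<sigma> \<in> Sub \<chi> \<union> (\<Union>y\<in>fv N. Sub (\<Omega> y))" using tApp.IH(2) bM ty by (auto simp: numeral_2_eq_2)
      then show ?thesis using S h by auto
    qed auto
  next
    show "\<exists>h\<in>fv (App M N). \<psi> \<in> Sub (\<Omega> h)" using h S Sub_refl[of \<psi>] by auto
  qed
qed


fun repl :: "'v trm \<Rightarrow> nat list \<Rightarrow> 'v trm \<Rightarrow> 'v trm" where
  "repl M [] P = P"
| "repl (Lam x M) (i#a) P = (if i = 1 then Lam x (repl M a P) else Lam x M)"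
| "repl (App M N) (i#a) P = (if i = 1 then App (repl M a P) N else if i = 2 then App M (repl N a P) else App M N)"
| "repl (Var x) (i#a) P = Var x"

lemma repl_fv: "b \<in> tdom M \<Longrightarrow> fv P = fv (M |@ b) \<Longrightarrow> fv (repl M b P) = fv M"
proof (induction M arbitrary: b)
  case (Var x) then show ?case by auto
next
  case (Lam x Q) from Lam.prems(1) show ?case
    by (cases rule: tdom_cases) (use Lam in auto)
next
  case (App Q R) from App.prems(1) show ?case
    by (cases rule: tdom_cases) (use App in \<open>auto simp: numeral_2_eq_2\<close>)
qed

lemma repl_typed: "b \<in> tdom M \<Longrightarrow> typed ord \<Omega> M \<sigma> \<Longrightarrow> typed ord \<Omega> (M |@ b) \<tau> \<Longrightarrow>
   typed ord \<Omega> P \<tau> \<Longrightarrow> fv P = fv (M |@ b) \<Longrightarrow> typed ord \<Omega> (repl M b P) \<sigma>"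
proof (induction M arbitrary: b \<sigma>)
  case (Var x) then show ?case using typed_unique by fastforce
next
  case (Lam x Q) from Lam.prems(1) show ?case
  proof (cases rule: tdom_cases)
    case Nil then show ?thesis using Lam.prems typed_unique by fastforce
  next
    case (Lam x' Q' d')
    from Lam.prems(2) obtain \<psi> where s: "\<sigma> = Imp (\<Omega> x) \<psi>" "typed ord \<Omega> Q \<psi>" "HRM ord (Lam x Q)"
      by (auto elim: typed_LamE)
    have t: "typed ord \<Omega> (repl Q d' P) \<psi>" using Lam.IH[of d' \<psi>] Lam.prems Lam s by auto
    have f: "fv (repl Q d' P) = fv Q" using repl_fv[of d' Q P] Lam Lam.prems by auto
    have "HRM ord (Lam x (repl Q d' P))" using s(3) typed_HRM[OF t] f by auto
    then show ?thesis using t s Lam by (auto intro: typed.tLam)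
  qed auto
next
  case (App Q R) from App.prems(1) show ?case
  proof (cases rule: tdom_cases)
    case Nil then show ?thesis using App.prems typed_unique by fastforce
  next
    case (App1 Q' R' d')
    from App.prems(2) obtain \<chi> where s: "typed ord \<Omega> Q (Imp \<chi> \<sigma>)" "typed ord \<Omega> R \<chi>" "HRM ord (App Q R)"
      by (auto elim: typed_AppE)
    have t: "typed ord \<Omega> (repl Q d' P) (Imp \<chi> \<sigma>)" using App.IH(1)[of d' "Imp \<chi> \<sigma>"] App.prems App1 s by auto
    have f: "fv (repl Q d' P) = fv Q" using repl_fv[of d' Q P] App1 App.prems by auto
    have "HRM ord (App (repl Q d' P) R)" using s(3) typed_HRM[OF t] f by auto
    then show ?thesis using t s App1 by (auto intro: typed.tApp)
  next
    case (App2 Q' R' d')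
    from App.prems(2) obtain \<chi> where s: "typed ord \<Omega> Q (Imp \<chi> \<sigma>)" "typed ord \<Omega> R \<chi>" "HRM ord (App Q R)"
      by (auto elim: typed_AppE)
    have t: "typed ord \<Omega> (repl R d' P) \<chi>" using App.IH(2)[of d' "\<chi>"] App.prems App2 s by (auto simp: numeral_2_eq_2)
    have f: "fv (repl R d' P) = fv R" using repl_fv[of d' R P] App2 App.prems by (auto simp: numeral_2_eq_2)
    have "HRM ord (App Q (repl R d' P))" using s(3) typed_HRM[OF t] f by auto
    then show ?thesis using t s App2 by (auto intro: typed.tApp simp: numeral_2_eq_2)
  qed auto
qed

lemma repl_notLam: "b \<noteq> [] \<Longrightarrow> \<forall>y Q. M \<noteq> Lam y Q \<Longrightarrow> \<forall>y Q. repl M b P \<noteq> Lam y Q"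
  by (cases M; cases b) auto

lemma repl_bn: "b \<in> tdom M \<Longrightarrow> beta_normal M \<Longrightarrow> beta_normal P \<Longrightarrow> \<forall>y Q. M |@ b \<noteq> Lam y Q \<Longrightarrow>
   \<forall>y Q. P \<noteq> Lam y Q \<Longrightarrow> beta_normal (repl M b P)"
proof (induction M arbitrary: b)
  case (Var x) then show ?case by auto
next
  case (Lam x Q) from Lam.prems(1) show ?case
    by (cases rule: tdom_cases) (use Lam in auto)
next
  case (App Q R) from App.prems(1) show ?case
  proof (cases rule: tdom_cases)
    case (App1 Q' R' d')
    have nl: "\<forall>y Q''. repl Q d' P \<noteq> Lam y Q''"
    proof (cases "d' = []")
      case True then show ?thesis using App.prems by simp
    next
      case False then show ?thesis using App.prems repl_notLam[of d' Q P] by auto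
    qed
    then show ?thesis using App.IH(1)[of d'] App.prems App1 by auto
  next
    case (App2 Q' R' d')
    then show ?thesis using App.IH(2)[of d'] App.prems by (auto simp: numeral_2_eq_2)
  qed (use App in auto)
qed

lemma repl_binders: "b \<in> tdom M \<Longrightarrow> subseq (binders P) (binders (M |@ b)) \<Longrightarrow>
   subseq (binders (repl M b P)) (binders M)"
proof (induction M arbitrary: b)
  case (Var x) then show ?case by auto
next
  case (Lam x Q) from Lam.prems(1) show ?case
    by (cases rule: tdom_cases) (use Lam in auto)
next
  case (App Q R) from App.prems(1) show ?case
    by (cases rule: tdom_cases) (use App in \<open>auto simp: numeral_2_eq_2 intro: list_emb_append_mono\<close>)
qed

lemma repl_tsize: "b \<in> tdom M \<Longrightarrow> tsize P < tsize (M |@ b) \<Longrightarrow> tsize (repl M b P) < tsize M"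
proof (induction M arbitrary: b)
  case (Var x) then show ?case by auto
next
  case (Lam x Q) from Lam.prems(1) show ?case
    by (cases rule: tdom_cases) (use Lam in auto)
next
  case (App Q R) from App.prems(1) show ?case
    by (cases rule: tdom_cases) (use App in \<open>auto simp: numeral_2_eq_2\<close>)
qed


lemma subseq_set: "subseq xs ys \<Longrightarrow> set xs \<subseteq> set ys"
  by (auto elim: list_emb_set)

lemma set_Free: "set (Free ord t) = fv t"
  by (simp add: Free_def fv_def)

lemma Free_eq: "inj ord \<Longrightarrow> fv A = fv B \<Longrightarrow> Free ord A = Free ord B"
  unfolding Free_def
  by (rule map_sorted_distinct_set_unique[where f = ord])
     (auto simp: fv_def distinct_map inj_on_def dest: injD)

lemma chain_card:
  assumes "finite X" "\<forall>A\<in>F. A \<subseteq> X \<and> A \<noteq> {}" "\<forall>A\<in>F. \<forall>B\<in>F. A \<subseteq> B \<or> B \<subseteq> A"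
  shows "card F \<le> card X"
proof -
  have fin: "\<And>A. A \<in> F \<Longrightarrow> finite A" using assms(1,2) finite_subset by blast
  have inj: "inj_on card F"
  proof (rule inj_onI)
    fix A B assume "A \<in> F" "B \<in> F" "card A = card B"
    then show "A = B" using assms(3) fin by (metis card_subset_eq)
  qed
  have "card ` F \<subseteq> {1..card X}"
    using assms fin by (auto simp: card_mono Suc_leI card_gt_0_iff)
  then have "card (card ` F) \<le> card X" by (metis card_atLeastAtMost card_mono diff_Suc_1 finite_atLeastAtMost)
  then show ?thesis using card_image[OF inj] by simp
qed

lemma shrink:
  assumes inh: "inhabitant ord \<Omega> M \<phi>" and b: "b \<in> tdom M" and d: "d \<noteq> []" "b @ d \<in> tdom M"
    and nl: "\<forall>y Q. M |@ b \<noteq> Lam y Q" "\<forall>y Q. M |@ (b @ d) \<noteq> Lam y Q"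
    and ty: "typed ord \<Omega> (M |@ b) \<tau>" "typed ord \<Omega> (M |@ (b @ d)) \<tau>"
    and fveq: "fv (M |@ (b @ d)) = fv (M |@ b)"
  shows "\<exists>M'. inhabitant ord \<Omega> M' \<phi> \<and> card (tdom M') < card (tdom M)"
proof -
  define P where "P = M |@ (b @ d)"
  have P: "P = (M |@ b) |@ d" "d \<in> tdom (M |@ b)" using at_append[OF b] d(2) tdom_append[of b d M] P_def by auto
  from inh have tM: "typed ord \<Omega> M \<phi>" and fvM: "fv M = {}" and bnM: "beta_normal M"
    and wfM: "wf_binders M"
    by (auto simp: inhabitant_def LambdaNF_def)
  define M' where "M' = repl M b P"
  have t': "typed ord \<Omega> M' \<phi>" unfolding M'_def
    using repl_typed[OF b tM ty(1)] ty(2) fveq P_def by auto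
  have fv': "fv M' = {}" unfolding M'_def using repl_fv[OF b] fveq fvM P_def by auto
  have bn': "beta_normal M'" unfolding M'_def
    using repl_bn[OF b bnM] bn_sub[OF bnM d(2)] nl P_def by auto
  have "subseq (binders P) (binders (M |@ b))" using binders_sub[OF P(2)] P(1) by simp
  then have "subseq (binders M') (binders M)" unfolding M'_def using repl_binders[OF b] by auto
  then have wf': "wf_binders M'" using wfM fv' subseq_distinct by (auto simp: wf_binders_def)
  have "tsize P < tsize (M |@ b)" using tsize_sub[OF P(2) d(1)] P(1) by simp
  then have "tsize M' < tsize M" unfolding M'_def using repl_tsize[OF b] by auto
  then have "card (tdom M') < card (tdom M)" by (simp add: card_tdom)
  moreover have "inhabitant ord \<Omega> M' \<phi>" using t' fv' bn' wf' by (auto simp: inhabitant_def LambdaNF_def)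
  ultimately show ?thesis by blast
qed


theorem lemma3p5:
  fixes ord :: "'v \<Rightarrow> nat" and \<Omega> :: "'v \<Rightarrow> 'a form"
    and M :: "'v trm" and \<phi> :: "'a form"
  assumes "inj ord"
    and "\<forall>\<psi>. infinite (\<Omega> -` {\<psi>})"
    and "inhabitant ord \<Omega> M \<phi>"
    and "\<not> locally_compact ord \<Omega> M \<phi>"
  shows "(\<exists>b b'. b \<in> tdom M \<and> b' \<in> tdom M \<and> strict_prefix b b'
            \<and> same_kind ord \<Omega> (M |@ b) (M |@ b') \<and> Free ord (M |@ b) = Free ord (M |@ b'))
       \<and> (\<exists>M'. inhabitant ord \<Omega> M' \<phi> \<and> card (tdom M') < card (tdom M))"
proof -
  from assms(3) have tM: "typed ord \<Omega> M \<phi>" and fvM: "fv M = {}" and bnM: "beta_normal M"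
    and wfM: "wf_binders M"
    by (auto simp: inhabitant_def LambdaNF_def)
  have subf: "\<And>d \<sigma>. d \<in> tdom M \<Longrightarrow> typed ord \<Omega> (M |@ d) \<sigma> \<Longrightarrow> \<sigma> \<in> Sub \<phi>"
    using subformula[OF tM bnM] fvM by auto
  from assms(3,4) obtain a where a: "a \<in> tdom M"
    and big: "rel_depth (blueprint ord \<Omega> (M |@ a)) > length (lams M a) * card (Sub \<phi>)"
    by (auto simp: locally_compact_def not_le)
  define N where "N = M |@ a"
  define n where "n = card (Sub \<phi>)"
  have wfN: "wf_binders N" using wf_sub[OF wfM a] N_def by simp
  have bnN: "beta_normal N" using bn_sub[OF bnM a] N_def by simp
  define bp where "bp = blueprint ord \<Omega> N"
  have dom_bp: "dom bp = stable_part ord N"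
    unfolding bp_def blueprint_def stable_part_def by (auto split: trm.splits if_splits)
  have finS: "finite (stable_part ord N)"
    by (rule finite_subset[OF _ tdom_finite[of N]]) (auto simp: stable_part_def)
  define k where "k = card (fv N)"
  have "fv N \<subseteq> set (lams M a)" using fv_lams[OF a] fvM N_def by auto
  then have kle: "k \<le> length (lams M a)" unfolding k_def
    by (meson List.finite_set card_length card_mono le_trans)
  have "dom bp \<noteq> {}" using big by (auto simp: rel_depth_def bp_def N_def)
  then have "Max (rel_depth_addr bp ` dom bp) > length (lams M a) * n"
    using big by (simp add: rel_depth_def bp_def N_def n_def)
  moreover have "Max (rel_depth_addr bp ` dom bp) \<in> rel_depth_addr bp ` dom bp"
    using \<open>dom bp \<noteq> {}\<close> finS dom_bp by (intro Max_in) auto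
  ultimately obtain c where c: "c \<in> stable_part ord N" and cbig: "rel_depth_addr bp c > length (lams M a) * n"
    using dom_bp by auto
  define B where "B = {b \<in> stable_part ord N. strict_prefix b c}"
  have cardB: "card B > k * n"
  proof -
    have "card B = rel_depth_addr bp c" unfolding B_def rel_depth_addr_def dom_bp ..
    moreover have "k * n \<le> length (lams M a) * n" using kle by simp
    ultimately show ?thesis using cbig by linarith
  qed
  have finB: "finite B" using finS by (auto simp: B_def)
  have cN: "c \<in> tdom N" using c by (auto simp: stable_part_def)
  have Bprops: "b \<in> tdom N \<and> (\<exists>P Q. N |@ b = App P Q) \<and> fv (N |@ b) \<subseteq> fv N \<and> fv (N |@ b) \<noteq> {}
       \<and> a @ b \<in> tdom M \<and> M |@ (a @ b) = N |@ b \<and> typed ord \<Omega> (N |@ b) (THE \<sigma>. typed ord \<Omega> (N |@ b) \<sigma>)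
       \<and> (THE \<sigma>. typed ord \<Omega> (N |@ b) \<sigma>) \<in> Sub \<phi>" if bB: "b \<in> B" for b
  proof -
    from bB have st: "b \<in> stable_part ord N" and sp: "strict_prefix b c" by (auto simp: B_def)
    from sp obtain e where e: "c = b @ e" "e \<noteq> []" by (auto simp: strict_prefix_def prefix_def)
    have bN: "b \<in> tdom N" using st by (auto simp: stable_part_def)
    have app: "\<exists>P Q. N |@ b = App P Q" using st var_leaf[of b e N] cN e by (auto simp: stable_part_def)
    have sub: "fv (N |@ b) \<subseteq> fv N" using st by (auto simp: stable_part_def set_Free)
    have ne: "fv (N |@ b) \<noteq> {}" using bn_fv[OF bn_sub[OF bnN bN]] app by auto
    have abM: "a @ b \<in> tdom M" using a bN tdom_append N_def by auto
    have eqM: "M |@ (a @ b) = N |@ b" using at_append[OF a] N_def by simp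
    obtain \<sigma> where ty: "typed ord \<Omega> (N |@ b) \<sigma>" using typed_sub[OF tM abM] eqM by auto
    have the: "(THE \<sigma>. typed ord \<Omega> (N |@ b) \<sigma>) = \<sigma>" using ty typed_unique by blast
    show ?thesis using bN app sub ne abM eqM ty the subf[OF abM] by auto
  qed
  have chain: "fv (N |@ b2) \<subseteq> fv (N |@ b1)" if "b1 \<in> B" "b2 \<in> B" "prefix b1 b2" for b1 b2
  proof -
    from that(3) obtain e where e: "b2 = b1 @ e" by (auto simp: prefix_def)
    have b1N: "b1 \<in> tdom N" using Bprops[OF that(1)] by simp
    have eN: "e \<in> tdom (N |@ b1)" using Bprops[OF that(2)] e tdom_append by auto
    have eq: "N |@ b2 = (N |@ b1) |@ e" using at_append[OF b1N] e by simp
    have 1: "fv (N |@ b2) \<subseteq> fv (N |@ b1) \<union> set (binders (N |@ b1))" using fv_sub[OF eN] eq by simp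
    have 2: "set (binders (N |@ b1)) \<subseteq> set (binders N)" using subseq_set[OF binders_sub[OF b1N]] .
    have 3: "fv N \<inter> set (binders N) = {}" using wfN by (auto simp: wf_binders_def)
    show ?thesis using 1 2 3 Bprops[OF that(2)] by blast
  qed
  have comp: "prefix b1 b2 \<or> prefix b2 b1" if "b1 \<in> B" "b2 \<in> B" for b1 b2
    using that prefix_same_cases[of b1 c b2] by (auto simp: B_def strict_prefix_def)
  define F where "F = (\<lambda>b. fv (N |@ b)) ` B"
  have cardF: "card F \<le> k" unfolding k_def
  proof (rule chain_card)
    show "finite (fv N)" by (simp add: fv_def)
    show "\<forall>A\<in>F. A \<subseteq> fv N \<and> A \<noteq> {}" using Bprops by (auto simp: F_def)
    show "\<forall>A\<in>F. \<forall>B\<in>F. A \<subseteq> B \<or> B \<subseteq> A"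
    proof (intro ballI)
      fix A A' assume "A \<in> F" "A' \<in> F"
      then obtain b1 b2 where "b1 \<in> B" "b2 \<in> B" "A = fv (N |@ b1)" "A' = fv (N |@ b2)"
        by (auto simp: F_def)
      then show "A \<subseteq> A' \<or> A' \<subseteq> A" using chain comp by metis
    qed
  qed
  define f where "f = (\<lambda>b. (fv (N |@ b), THE \<sigma>. typed ord \<Omega> (N |@ b) \<sigma>))"
  have fB: "f ` B \<subseteq> F \<times> Sub \<phi>" using Bprops by (auto simp: f_def F_def)
  have finF: "finite F" using finB by (simp add: F_def)
  have "card (F \<times> Sub \<phi>) \<le> k * n"
    using cardF by (simp add: card_cartesian_product n_def)
  have "\<not> inj_on f B"
  proof
    assume "inj_on f B"
    then have "card B = card (f ` B)" by (simp add: card_image)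
    also have "\<dots> \<le> card (F \<times> Sub \<phi>)" using fB finF Sub_finite by (intro card_mono) auto
    finally show False using \<open>card (F \<times> Sub \<phi>) \<le> k * n\<close> cardB by linarith
  qed
  then obtain b1 b2 where bb: "b1 \<in> B" "b2 \<in> B" "b1 \<noteq> b2" "f b1 = f b2"
    by (auto simp: inj_on_def)
  have concl: "?thesis" if x: "x \<in> B" and y: "y \<in> B" and sp: "strict_prefix x y" and fe: "f x = f y" for x y
  proof -
    from sp obtain e where e: "y = x @ e" "e \<noteq> []" by (auto simp: strict_prefix_def prefix_def)
    define \<tau> where "\<tau> = (THE \<sigma>. typed ord \<Omega> (N |@ x) \<sigma>)"
    have fveq: "fv (N |@ x) = fv (N |@ y)" and tyeq: "(THE \<sigma>. typed ord \<Omega> (N |@ y) \<sigma>) = \<tau>"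
      using fe by (auto simp: f_def \<tau>_def)
    from Bprops[OF x] have xa: "a @ x \<in> tdom M" and xe: "M |@ (a @ x) = N |@ x"
      and xt: "typed ord \<Omega> (N |@ x) \<tau>" and xapp: "\<exists>P Q. N |@ x = App P Q"
      unfolding \<tau>_def by blast+
    from Bprops[OF y] have ya: "a @ y \<in> tdom M" and ye: "M |@ (a @ y) = N |@ y"
      and yt: "typed ord \<Omega> (N |@ y) \<tau>" and yapp: "\<exists>P Q. N |@ y = App P Q"
      using tyeq by blast+
    have sp': "strict_prefix (a @ x) (a @ y)" using sp by (auto simp: strict_prefix_def)
    have sk: "same_kind ord \<Omega> (M |@ (a @ x)) (M |@ (a @ y))"
      unfolding same_kind_def xe ye using xapp yapp xt yt by blast
    have fr: "Free ord (M |@ (a @ x)) = Free ord (M |@ (a @ y))"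
      unfolding xe ye using Free_eq[OF assms(1) fveq] .
    have ya': "(a @ x) @ e \<in> tdom M" and ye': "M |@ ((a @ x) @ e) = N |@ y" using ya ye e by auto
    have "\<exists>M'. inhabitant ord \<Omega> M' \<phi> \<and> card (tdom M') < card (tdom M)"
    proof (rule shrink[OF assms(3) xa e(2) ya'])
      show "\<forall>y Q. M |@ (a @ x) \<noteq> Lam y Q" using xapp xe by auto
      show "\<forall>y' Q. M |@ ((a @ x) @ e) \<noteq> Lam y' Q" using yapp ye' by auto
      show "typed ord \<Omega> (M |@ (a @ x)) \<tau>" using xt xe by simp
      show "typed ord \<Omega> (M |@ ((a @ x) @ e)) \<tau>" using yt ye' by simp
      show "fv (M |@ ((a @ x) @ e)) = fv (M |@ (a @ x))" using xe ye' fveq by simp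
    qed
    then show ?thesis using xa ya sp' sk fr by blast
  qed
  from comp[OF bb(1,2)] show ?thesis
  proof
    assume "prefix b1 b2" then show ?thesis using concl[OF bb(1,2)] bb by (auto simp: strict_prefix_def)
  next
    assume "prefix b2 b1" then show ?thesis using concl[OF bb(2,1)] bb by (auto simp: strict_prefix_def)
  qed
qed


end
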